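(* Let $0<T\le1$ and $f\in_d A^M_T$ be of the form $f(x)=c(b-x)$ for $x\in(0,b)$ and $f(x)=0$ for $x\in[b,T)$, for some $0<b\le T$ and $c>0$. Then $f\in_d I^M_T$.
   Context: Setting: intrinsic location functionals $L$ on a shift-invariant class $H$ of period-$1$ functions (maps $L:H\times\mathcal I\to\mathbb R\cup\{\infty\}$, $\mathcal I$ the compact nondegenerate intervals, that are measurable, satisfy $L(g,I)\in I\cup\{\infty\}$, $L(g,I)=L(\theta_cg,I-c)+c$ with $\theta_cg(x)=g(x+c)$, and: $I_2\subseteq I_1$, $L(g,I_1)\in I_2\Rightarrow L(g,I_2)=L(g,I_1)$; $I_2\subseteq I_1$, $L(g,I_2)\ne\infty\Rightarrow L(g,I_1)\ne\infty$). $L$ is first-time if it admits a representation by sets $S(g)\subseteq\mathbb R$ with $S(g)=S(\theta_cg)+c$ and shift-compatible partial orders $\preceq$ on $S(g)$ such that $L(g,I)=\infty$ if $S(g)\cap I=\emptyset$ and otherwise is the unique $\preceq$-maximal element of $S(g)\cap I$, and in which $t_1\le t_2$ implies $t_2\preceq t_1$. A periodic stationary process with period $1$ is a stationary process with continuous period-$1$ sample paths in $H$. $I^M_T$ is the set of all laws of $L(\mathbf X,[0,T])$ over all first-time $L$ and all periodic stationary $\mathbf X$ with period $1$. $A^M_T$ is the class of probability distributions on $[0,T]\cup\{\infty\}$ absolutely continuous on $(0,T)$ with càdlàg non-increasing density there (so $\int_0^Tf\le1$). $f\in_d A$ means some $F\in A$ has density $f$ on $(0,T)$. *)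

theory Defs
  imports "HOL-Probability.Probability"
begin

definition shift :: "real \<Rightarrow> (real \<Rightarrow> real) \<Rightarrow> (real \<Rightarrow> real)" where
  "shift c g = (\<lambda>x. g (x + c))"

definition Hper :: "(real \<Rightarrow> real) set" where
  "Hper = {g. continuous_on UNIV g \<and> (\<forall>x. g (x + 1) = g x)}"

definition path_space :: "(real \<Rightarrow> real) measure" where
  "path_space = Pi\<^sub>M UNIV (\<lambda>_. (borel :: real measure))"

definition intrinsic_location :: "((real \<Rightarrow> real) \<Rightarrow> real \<Rightarrow> real \<Rightarrow> ereal) \<Rightarrow> bool" where
  "intrinsic_location L \<longleftrightarrow>
     (\<forall>a b. a < b \<longrightarrow> (\<lambda>g. L g a b) \<in> borel_measurable (restrict_space path_space Hper)) \<and>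
     (\<forall>g\<in>Hper. \<forall>a b. a < b \<longrightarrow> L g a b \<in> ereal ` {a..b} \<union> {\<infinity>}) \<and>
     (\<forall>g\<in>Hper. \<forall>a b c. a < b \<longrightarrow> L g a b = L (shift c g) (a - c) (b - c) + ereal c) \<and>
     (\<forall>g\<in>Hper. \<forall>a1 b1 a2 b2. a2 < b2 \<longrightarrow> a1 \<le> a2 \<longrightarrow> b2 \<le> b1 \<longrightarrow>
         L g a1 b1 \<in> ereal ` {a2..b2} \<longrightarrow> L g a2 b2 = L g a1 b1) \<and>
     (\<forall>g\<in>Hper. \<forall>a1 b1 a2 b2. a2 < b2 \<longrightarrow> a1 \<le> a2 \<longrightarrow> b2 \<le> b1 \<longrightarrow>
         L g a2 b2 \<noteq> \<infinity> \<longrightarrow> L g a1 b1 \<noteq> \<infinity>)"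

text \<open>First-time intrinsic location functionals: representation by sets S g and
  shift-compatible partial orders le g on S g.\<close>
definition first_time :: "((real \<Rightarrow> real) \<Rightarrow> real \<Rightarrow> real \<Rightarrow> ereal) \<Rightarrow> bool" where
  "first_time L \<longleftrightarrow>
    (\<exists>(S :: (real \<Rightarrow> real) \<Rightarrow> real set) (le :: (real \<Rightarrow> real) \<Rightarrow> real \<Rightarrow> real \<Rightarrow> bool).
       (\<forall>g\<in>Hper. \<forall>c. S g = (\<lambda>t. t + c) ` S (shift c g)) \<and>
       (\<forall>g\<in>Hper. (\<forall>t\<in>S g. le g t t) \<and>
                  (\<forall>s\<in>S g. \<forall>t\<in>S g. le g s t \<longrightarrow> le g t s \<longrightarrow> s = t) \<and>
                  (\<forall>r\<in>S g. \<forall>s\<in>S g. \<forall>t\<in>S g. le g r s \<longrightarrow> le g s t \<longrightarrow> le g r t)) \<and>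
       (\<forall>g\<in>Hper. \<forall>c. \<forall>s\<in>S (shift c g). \<forall>t\<in>S (shift c g).
           le (shift c g) s t \<longleftrightarrow> le g (s + c) (t + c)) \<and>
       (\<forall>g\<in>Hper. \<forall>t1\<in>S g. \<forall>t2\<in>S g. t1 \<le> t2 \<longrightarrow> le g t2 t1) \<and>
       (\<forall>g\<in>Hper. \<forall>a b. a < b \<longrightarrow>
          (if S g \<inter> {a..b} = {} then L g a b = \<infinity>
           else (\<exists>t. (t \<in> S g \<inter> {a..b} \<and> (\<forall>s\<in>S g \<inter> {a..b}. le g t s \<longrightarrow> s = t)) \<and>
                      (\<forall>t'. (t' \<in> S g \<inter> {a..b} \<and> (\<forall>s\<in>S g \<inter> {a..b}. le g t' s \<longrightarrow> s = t'))
                             \<longrightarrow> t' = t) \<and>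
                      L g a b = ereal t))))"

definition periodic_stationary :: "'a measure \<Rightarrow> ('a \<Rightarrow> real \<Rightarrow> real) \<Rightarrow> bool" where
  "periodic_stationary M X \<longleftrightarrow>
     prob_space M \<and> (\<forall>\<omega>\<in>space M. X \<omega> \<in> Hper) \<and> X \<in> measurable M path_space \<and>
     (\<forall>c. distr M path_space (\<lambda>\<omega>. shift c (X \<omega>)) = distr M path_space X)"

text \<open>I^M_T: laws of L(X,[0,T]); the sample space is taken canonical (path space type).\<close>
definition I_M :: "real \<Rightarrow> ereal measure set" where
  "I_M T = {distr M borel (\<lambda>\<omega>. L (X \<omega>) 0 T) | (M :: (real \<Rightarrow> real) measure) X L.
              periodic_stationary M X \<and> intrinsic_location L \<and> first_time L}"

definition has_density_on :: "real \<Rightarrow> ereal measure \<Rightarrow> (real \<Rightarrow> real) \<Rightarrow> bool" where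
  "has_density_on T N f \<longleftrightarrow>
     (\<forall>A\<in>sets lborel. A \<subseteq> {0<..<T} \<longrightarrow>
        emeasure N (ereal ` A) = (\<integral>\<^sup>+x. indicator A x * ennreal (f x) \<partial>lborel))"

definition A_M :: "real \<Rightarrow> ereal measure set" where
  "A_M T = {N. sets N = sets (borel :: ereal measure) \<and> prob_space N \<and>
              emeasure N (UNIV - (ereal ` {0..T} \<union> {\<infinity>})) = 0 \<and>
              (\<exists>h. has_density_on T N h \<and>
                   (\<forall>x\<in>{0<..<T}. 0 \<le> h x) \<and>
                   (\<forall>x y. 0 < x \<longrightarrow> x \<le> y \<longrightarrow> y < T \<longrightarrow> h y \<le> h x) \<and>
                   (\<forall>x\<in>{0<..<T}. continuous (at_right x) h \<and> (\<exists>l. (h \<longlongrightarrow> l) (at_left x))))}"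

definition in_d :: "real \<Rightarrow> (real \<Rightarrow> real) \<Rightarrow> ereal measure set \<Rightarrow> bool" where
  "in_d T f A \<longleftrightarrow> (\<exists>N\<in>A. has_density_on T N f)"

end

theory Submission
  imports Defs
begin


definition Zs :: "(real \<Rightarrow> real) \<Rightarrow> real set" where "Zs g = {t. g t = 0}"
definition Lz :: "(real \<Rightarrow> real) \<Rightarrow> real \<Rightarrow> real \<Rightarrow> ereal" where
  "Lz g a b = (if Zs g \<inter> {a..b} = {} then \<infinity> else ereal (Inf (Zs g \<inter> {a..b})))"

lemma Zs_closed: "g \<in> Hper \<Longrightarrow> closed (Zs g)"
  unfolding Zs_def Hper_def by (auto intro!: closed_Collect_eq continuous_intros)

lemma Inf_in:
  assumes "g \<in> Hper" "Zs g \<inter> {a..b} \<noteq> {}"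
  shows "Inf (Zs g \<inter> {a..b}) \<in> Zs g \<inter> {a..b}" "\<And>s. s \<in> Zs g \<inter> {a..b} \<Longrightarrow> Inf (Zs g \<inter> {a..b}) \<le> s"
proof -
  have cl: "closed (Zs g \<inter> {a..b})" using Zs_closed[OF assms(1)] by auto
  show "Inf (Zs g \<inter> {a..b}) \<in> Zs g \<inter> {a..b}"
    by (rule closed_contains_Inf[OF assms(2) _ cl]) (auto intro: bdd_belowI[where m=a])
  fix s assume "s \<in> Zs g \<inter> {a..b}" thus "Inf (Zs g \<inter> {a..b}) \<le> s"
    by (intro cInf_lower) (auto intro: bdd_belowI[where m=a])
qed

lemma Zs_shift: "Zs (shift c g) = (\<lambda>t. t - c) ` Zs g"
  unfolding Zs_def shift_def by (auto simp: image_iff intro!: exI[where x="_ + c"])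

lemma Lz_charI:
  assumes "g \<in> Hper" "t \<in> Zs g" "a \<le> t" "t \<le> b" "\<And>s. s \<in> Zs g \<Longrightarrow> a \<le> s \<Longrightarrow> s < t \<Longrightarrow> False"
  shows "Lz g a b = ereal t"
proof -
  have ne: "Zs g \<inter> {a..b} \<noteq> {}" using assms by auto
  have "Inf (Zs g \<inter> {a..b}) = t"
    using Inf_in[OF assms(1) ne] assms by (meson IntD1 IntD2 atLeastAtMost_iff le_less_linear order_antisym_conv IntI)
  thus ?thesis using ne unfolding Lz_def by simp
qed

lemma Lz_cases:
  assumes "g \<in> Hper"
  shows "(Zs g \<inter> {a..b} = {} \<and> Lz g a b = \<infinity>) \<or>
    (\<exists>t. t \<in> Zs g \<inter> {a..b} \<and> (\<forall>s\<in>Zs g \<inter> {a..b}. t \<le> s) \<and> Lz g a b = ereal t)"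
  using Inf_in[OF assms] unfolding Lz_def by (cases "Zs g \<inter> {a..b} = {}") auto

lemma shift_Hper: "g \<in> Hper \<Longrightarrow> shift c g \<in> Hper"
proof -
  assume g: "g \<in> Hper"
  have "continuous_on UNIV (g \<circ> (\<lambda>x. x + c))"
    by (rule continuous_on_compose) (use g in \<open>auto intro!: continuous_intros continuous_on_subset[of UNIV g] simp: Hper_def\<close>)
  moreover have "\<forall>x. g (x + c + 1) = g (x + c)" using g by (simp add: Hper_def)
  ultimately show ?thesis unfolding Hper_def shift_def by (auto simp: o_def ac_simps)
qed

lemma first_time_Lz: "first_time Lz"
  unfolding first_time_def
proof (intro exI[where x=Zs] exI[where x="\<lambda>g s t. t \<le> s"] conjI ballI allI impI)
  fix g c assume g: "g \<in> Hper"
  show "Zs g = (\<lambda>t. t + c) ` Zs (shift c g)" unfolding Zs_shift by (auto simp: image_image)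
next
  fix g a b assume g: "g \<in> Hper" and ab: "(a::real) < b"
  show "if Zs g \<inter> {a..b} = {} then Lz g a b = \<infinity>
       else (\<exists>t. (t \<in> Zs g \<inter> {a..b} \<and> (\<forall>s\<in>Zs g \<inter> {a..b}. s \<le> t \<longrightarrow> s = t)) \<and>
                 (\<forall>t'. t' \<in> Zs g \<inter> {a..b} \<and> (\<forall>s\<in>Zs g \<inter> {a..b}. s \<le> t' \<longrightarrow> s = t') \<longrightarrow> t' = t) \<and>
                 Lz g a b = ereal t)"
  proof (cases "Zs g \<inter> {a..b} = {}")
    case True thus ?thesis unfolding Lz_def by simp
  next
    case False
    note I = Inf_in[OF g False]
    define t where "t = Inf (Zs g \<inter> {a..b})"
    have t1: "t \<in> Zs g \<inter> {a..b}" and t2: "\<And>s. s \<in> Zs g \<inter> {a..b} \<Longrightarrow> t \<le> s" using I unfolding t_def by auto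
    have "(t \<in> Zs g \<inter> {a..b} \<and> (\<forall>s\<in>Zs g \<inter> {a..b}. s \<le> t \<longrightarrow> s = t)) \<and>
                 (\<forall>t'. t' \<in> Zs g \<inter> {a..b} \<and> (\<forall>s\<in>Zs g \<inter> {a..b}. s \<le> t' \<longrightarrow> s = t') \<longrightarrow> t' = t) \<and>
                 Lz g a b = ereal t"
      using t1 t2 False unfolding Lz_def t_def[symmetric] by (auto intro: antisym) (metis IntI atLeastAtMost_iff)
    thus ?thesis using False by auto
  qed
qed auto




lemma coord_meas: "(\<lambda>g. g q) \<in> borel_measurable path_space"
  unfolding path_space_def by simp

lemma exzero_iff:
  fixes a m :: real
  assumes g: "g \<in> Hper" and am: "a \<le> m"
  defines "D \<equiv> insert a (\<rat> \<inter> {a..m})"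
  shows "(\<exists>t\<in>{a..m}. g t = 0) \<longleftrightarrow> (\<forall>n::nat. \<exists>q\<in>D. \<bar>g q\<bar> < 1 / Suc n)"
proof
  have cont: "continuous_on UNIV g" using g by (simp add: Hper_def)
  assume "\<exists>t\<in>{a..m}. g t = 0"
  then obtain t where t: "t \<in> {a..m}" "g t = 0" by auto
  show "\<forall>n::nat. \<exists>q\<in>D. \<bar>g q\<bar> < 1 / Suc n"
  proof
    fix n :: nat
    have "isCont g t" using cont by (simp add: continuous_on_eq_continuous_at)
    then obtain d where d: "d > 0" "\<And>y. dist y t < d \<Longrightarrow> dist (g y) (g t) < 1 / Suc n"
      unfolding continuous_at_eps_delta by (metis of_nat_0_less_iff zero_less_Suc divide_pos_pos zero_less_one)
    show "\<exists>q\<in>D. \<bar>g q\<bar> < 1 / Suc n"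
    proof (cases "t = a")
      case True thus ?thesis using d(2)[of a] d(1) t by (auto simp: D_def)
    next
      case False
      hence "max a (t - d) < t" using t d by auto
      then obtain q where q: "q \<in> \<rat>" "max a (t - d) < q" "q < t" using Rats_dense_in_real by blast
      hence "q \<in> D" using t by (auto simp: D_def)
      moreover have "dist q t < d" using q by (auto simp: dist_real_def)
      ultimately show ?thesis using d(2)[of q] t by (auto simp: dist_real_def)
    qed
  qed
next
  assume H: "\<forall>n::nat. \<exists>q\<in>D. \<bar>g q\<bar> < 1 / Suc n"
  show "\<exists>t\<in>{a..m}. g t = 0"
  proof (rule ccontr)
    assume nz: "\<not> ?thesis"
    have cont: "continuous_on {a..m} (\<lambda>x. \<bar>g x\<bar>)" using g
      by (auto simp: Hper_def intro!: continuous_intros continuous_on_subset[of UNIV g])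
    obtain x where x: "x \<in> {a..m}" "\<And>y. y \<in> {a..m} \<Longrightarrow> \<bar>g x\<bar> \<le> \<bar>g y\<bar>"
      using continuous_attains_inf[OF compact_Icc _ cont] am by auto
    have pos: "\<bar>g x\<bar> > 0" using nz x by auto
    obtain n :: nat where n: "1 / Suc n < \<bar>g x\<bar>"
      using pos by (metis nat_approx_posE)
    from H obtain q where q: "q \<in> D" "\<bar>g q\<bar> < 1 / Suc n" by blast
    have "q \<in> {a..m}" using q am by (auto simp: D_def)
    thus False using x(2)[of q] q n by auto
  qed
qed

lemma exzero_meas:
  fixes a m :: real
  shows "{g \<in> Hper. \<exists>t\<in>{a..m}. g t = 0} \<in> sets (restrict_space path_space Hper)"
proof (cases "a \<le> m")
  case False
  hence e: "{g \<in> Hper. \<exists>t\<in>{a..m}. g t = 0} = {}" by auto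
  show ?thesis unfolding e by simp
next
  case True
  define D where "D = insert a (\<rat> \<inter> {a..m})"
  have cD: "countable D" unfolding D_def by (auto intro: countable_rat countable_subset[of _ \<rat>])
  have eq: "{g \<in> Hper. \<exists>t\<in>{a..m}. g t = 0} = {g \<in> space (restrict_space path_space Hper). \<forall>n::nat. \<exists>q\<in>D. \<bar>g q\<bar> < 1 / Suc n}"
    using exzero_iff[OF _ True] unfolding D_def by (auto simp: space_restrict_space path_space_def space_PiM)
  note [measurable] = coord_meas
  have "Measurable.pred path_space (\<lambda>g. \<forall>n::nat. \<exists>q\<in>D. \<bar>g q\<bar> < 1 / Suc n)"
    using cD by measurable
  hence "Measurable.pred (restrict_space path_space Hper) (\<lambda>g. \<forall>n::nat. \<exists>q\<in>D. \<bar>g q\<bar> < 1 / Suc n)"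
    by (rule measurable_restrict_space1)
  thus ?thesis unfolding eq by measurable
qed




lemma Lz_less_iff:
  assumes g: "g \<in> Hper"
  shows "Lz g a b < ereal r \<longleftrightarrow> (\<exists>n::nat. \<exists>t\<in>{a..min b (r - 1 / Suc n)}. g t = 0)"
proof
  assume L: "Lz g a b < ereal r"
  from Lz_cases[OF g, of a b] L obtain t where t: "t \<in> Zs g \<inter> {a..b}" "Lz g a b = ereal t" by auto
  have "t < r" using t L by auto
  then obtain n :: nat where n: "1 / Suc n < r - t" by (metis diff_gt_0_iff_gt nat_approx_posE)
  thus "\<exists>n::nat. \<exists>t\<in>{a..min b (r - 1 / Suc n)}. g t = 0" using t by (intro exI[of _ n] bexI[of _ t]) (auto simp: Zs_def)
next
  assume "\<exists>n::nat. \<exists>t\<in>{a..min b (r - 1 / Suc n)}. g t = 0"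
  then obtain n :: nat and t where t: "t \<in> {a..min b (r - 1 / Suc n)}" "g t = 0" by auto
  have "0 < 1 / real (Suc n)" by simp
  moreover have "t \<le> r - 1 / real (Suc n)" using t(1) by simp
  ultimately have "t < r" by linarith
  have ne: "Zs g \<inter> {a..b} \<noteq> {}" using t by (auto simp: Zs_def)
  have "Inf (Zs g \<inter> {a..b}) \<le> t" using Inf_in(2)[OF g ne, of t] t by (auto simp: Zs_def)
  thus "Lz g a b < ereal r" using ne \<open>t < r\<close> unfolding Lz_def by auto
qed

lemma Lz_meas: "(\<lambda>g. Lz g a b) \<in> borel_measurable (restrict_space path_space Hper)"
  unfolding borel_measurable_ereal_iff_Iio
proof
  fix y :: ereal
  have sp: "space (restrict_space path_space Hper) = Hper"
    by (auto simp: space_restrict_space path_space_def space_PiM)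
  show "(\<lambda>g. Lz g a b) -` {..<y} \<inter> space (restrict_space path_space Hper) \<in> sets (restrict_space path_space Hper)"
  proof (cases y)
    case (real r)
    have "(\<lambda>g. Lz g a b) -` {..<y} \<inter> space (restrict_space path_space Hper) =
       (\<Union>n::nat. {g \<in> Hper. \<exists>t\<in>{a..min b (r - 1 / Suc n)}. g t = 0})"
      unfolding sp real
    proof (intro set_eqI iffI)
      fix g assume "g \<in> (\<lambda>g. Lz g a b) -` {..<ereal r} \<inter> Hper"
      thus "g \<in> (\<Union>n::nat. {g \<in> Hper. \<exists>t\<in>{a..min b (r - 1 / Suc n)}. g t = 0})"
        using Lz_less_iff[of g a b r] by blast
    next
      fix g assume "g \<in> (\<Union>n::nat. {g \<in> Hper. \<exists>t\<in>{a..min b (r - 1 / Suc n)}. g t = 0})"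
      thus "g \<in> (\<lambda>g. Lz g a b) -` {..<ereal r} \<inter> Hper"
        using Lz_less_iff[of g a b r] by blast
    qed
    thus ?thesis using exzero_meas by auto
  next
    case PInf
    have "(\<lambda>g. Lz g a b) -` {..<y} \<inter> space (restrict_space path_space Hper) = {g \<in> Hper. \<exists>t\<in>{a..b}. g t = 0}"
      unfolding sp PInf unfolding Lz_def by (auto split: if_splits simp: Zs_def disjoint_iff) (metis atLeastAtMost_iff)
    thus ?thesis using exzero_meas by auto
  next
    case MInf
    have "(\<lambda>g. Lz g a b) -` {..<y} \<inter> space (restrict_space path_space Hper) = {}" unfolding MInf by (simp add: lessThan_def)
    thus ?thesis by (simp only: sets.empty_sets)
  qed
qed

lemma intrinsic_Lz: "intrinsic_location Lz"
  unfolding intrinsic_location_def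
proof (intro conjI allI impI ballI)
  fix a b :: real assume "a < b" show "(\<lambda>g. Lz g a b) \<in> borel_measurable (restrict_space path_space Hper)"
    by (rule Lz_meas)
next
  fix g and a b :: real assume g: "g \<in> Hper" and "a < b"
  show "Lz g a b \<in> ereal ` {a..b} \<union> {\<infinity>}" using Lz_cases[OF g, of a b] by auto
next
  fix g and a b c :: real assume g: "g \<in> Hper" and "a < b"
  have gs: "shift c g \<in> Hper" using g by (rule shift_Hper)
  show "Lz g a b = Lz (shift c g) (a - c) (b - c) + ereal c"
  proof (cases "Zs g \<inter> {a..b} = {}")
    case True
    hence "Zs (shift c g) \<inter> {a-c..b-c} = {}" unfolding Zs_shift by auto
    thus ?thesis using True unfolding Lz_def by simp
  next
    case False
    then obtain t where t: "t \<in> Zs g \<inter> {a..b}" "\<forall>s\<in>Zs g \<inter> {a..b}. t \<le> s" "Lz g a b = ereal t"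
      using Lz_cases[OF g, of a b] by auto
    have "Lz (shift c g) (a - c) (b - c) = ereal (t - c)"
    proof (rule Lz_charI[OF gs])
      show "t - c \<in> Zs (shift c g)" using t(1) unfolding Zs_shift by auto
      show "a - c \<le> t - c" "t - c \<le> b - c" using t(1) by auto
      fix s assume "s \<in> Zs (shift c g)" "a - c \<le> s" "s < t - c"
      hence "s + c \<in> Zs g \<inter> {a..b}" using t(1) unfolding Zs_shift by auto
      hence "t \<le> s + c" using t(2) by blast
      thus False using \<open>s < t - c\<close> by linarith
    qed
    thus ?thesis using t by simp
  qed
next
  fix g and a1 b1 a2 b2 :: real assume g: "g \<in> Hper" and "a2 < b2" "a1 \<le> a2" "b2 \<le> b1"
    "Lz g a1 b1 \<in> ereal ` {a2..b2}"
  then obtain t where t: "t \<in> Zs g \<inter> {a1..b1}" "\<forall>s\<in>Zs g \<inter> {a1..b1}. t \<le> s" "Lz g a1 b1 = ereal t" "t \<in> {a2..b2}"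
    using Lz_cases[OF g, of a1 b1] by auto
  have "Lz g a2 b2 = ereal t"
  proof (rule Lz_charI[OF g])
    show "t \<in> Zs g" "a2 \<le> t" "t \<le> b2" using t by auto
    fix s assume s: "s \<in> Zs g" "a2 \<le> s" "s < t"
    have "s \<in> Zs g \<inter> {a1..b1}" using s t(4) \<open>a1 \<le> a2\<close> \<open>b2 \<le> b1\<close> by auto
    hence "t \<le> s" using t(2) by blast
    thus False using s by linarith
  qed
  thus "Lz g a2 b2 = Lz g a1 b1" using t by simp
next
  fix g and a1 b1 a2 b2 :: real assume g: "g \<in> Hper" and "a2 < b2" "a1 \<le> a2" "b2 \<le> b1"
    "Lz g a2 b2 \<noteq> \<infinity>"
  thus "Lz g a1 b1 \<noteq> \<infinity>" unfolding Lz_def by (auto split: if_splits)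
qed




lemma lborel_reflect: "emeasure lborel ((\<lambda>x. q - x) -` B) = emeasure lborel (B::real set)" if "B \<in> sets borel"
proof -
  have "lborel = density (distr lborel borel (\<lambda>x. q + (-1) * x)) (\<lambda>_. ennreal (abs (-1::real)))"
    by (rule lborel_real_affine) simp
  hence e: "distr lborel borel (\<lambda>x. q - x) = lborel" by (simp add: density_1)
  have "emeasure lborel B = emeasure (distr lborel borel (\<lambda>x. q - x)) B" by (simp add: e)
  also have "\<dots> = emeasure lborel ((\<lambda>x. q - x) -` B)" using that by (subst emeasure_distr) auto
  finally show ?thesis ..
qed

locale cfg =
  fixes p :: "nat \<Rightarrow> real" and n :: nat and T :: real and g :: "real \<Rightarrow> real"
  assumes n: "0 < n" and p0: "p 0 = 0" and pn: "p n = 1"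
    and mono: "\<And>i. i < n \<Longrightarrow> p i \<le> p (Suc i)"
    and gapT: "\<And>i. i < n \<Longrightarrow> p (Suc i) - p i \<le> T"
    and g: "g \<in> Hper"
    and Z: "Zs g = {x. \<exists>i<n. \<exists>k::int. x = p i + k}"
begin

lemma mono_le: "j \<le> k \<Longrightarrow> k \<le> n \<Longrightarrow> p j \<le> p k"
proof (induction k)
  case 0 thus ?case by simp
next
  case (Suc k)
  show ?case
  proof (cases "j = Suc k")
    case False
    hence "p j \<le> p k" using Suc by auto
    also have "\<dots> \<le> p (Suc k)" using mono Suc by auto
    finally show ?thesis .
  qed simp
qed

lemma p_range: "j \<le> n \<Longrightarrow> 0 \<le> p j \<and> p j \<le> 1"
  using mono_le[of 0 j] mono_le[of j n] p0 pn by auto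

lemma Lz_formula:
  assumes i: "i < n" and th: "p i < \<theta>" "\<theta> \<le> p (Suc i)"
  shows "Lz (shift \<theta> g) 0 T = ereal (p (Suc i) - \<theta>)"
proof (rule Lz_charI)
  show "shift \<theta> g \<in> Hper" using g by (rule shift_Hper)
  have "p (Suc i) \<in> Zs g"
  proof (cases "Suc i = n")
    case True
    hence "p (Suc i) = p 0 + of_int 1" using p0 pn by simp
    thus ?thesis unfolding Z using n by blast
  next
    case False
    hence "Suc i < n" using i by simp
    thus ?thesis unfolding Z by (intro CollectI exI[of _ "Suc i"] exI[of _ 0]) auto
  qed
  thus "p (Suc i) - \<theta> \<in> Zs (shift \<theta> g)" unfolding Zs_shift by auto
  show "0 \<le> p (Suc i) - \<theta>" using th by simp
  show "p (Suc i) - \<theta> \<le> T" using th gapT[OF i] by simp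
  fix s assume s: "s \<in> Zs (shift \<theta> g)" "0 \<le> s" "s < p (Suc i) - \<theta>"
  then obtain j k where jk: "j < n" "s + \<theta> = p j + of_int k" unfolding Zs_shift Z by auto
  have pj: "0 \<le> p j" "p j \<le> 1" using p_range[of j] jk by auto
  have pi: "0 \<le> p i" "p (Suc i) \<le> 1" using p_range[of i] p_range[of "Suc i"] i by auto
  have lo: "p i < p j + of_int k" "p j + of_int k < p (Suc i)" using s jk th by linarith+
  show False
  proof (cases k "0::int" rule: linorder_cases)
    case less hence "of_int k \<le> (-1::real)" by simp
    thus False using lo pj pi by linarith
  next
    case greater hence "of_int k \<ge> (1::real)" by simp
    thus False using lo pj pi by linarith
  next
    case equal
    show False
    proof (cases "j \<le> i")
      case True thus False using mono_le[of j i] lo equal i by simp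
    next
      case False thus False using mono_le[of "Suc i" j] lo equal jk by simp
    qed
  qed
qed

lemma cover: "m \<le> n \<Longrightarrow> 0 < \<theta> \<Longrightarrow> \<theta> \<le> p m \<Longrightarrow> \<exists>i<m. p i < \<theta> \<and> \<theta> \<le> p (Suc i)"
proof (induction m)
  case 0 thus ?case using p0 by simp
next
  case (Suc m)
  show ?case
  proof (cases "\<theta> \<le> p m")
    case True thus ?thesis using Suc by (metis less_SucI Suc_leD)
  next
    case False thus ?thesis using Suc by auto
  qed
qed

lemma phase_measure:
  assumes A: "A \<in> sets borel" "A \<subseteq> {0<..}"
  shows "emeasure lborel {\<theta>\<in>{0<..1}. Lz (shift \<theta> g) 0 T \<in> ereal ` A} =
    (\<Sum>i<n. emeasure lborel (A \<inter> {..< p (Suc i) - p i}))"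
proof -
  define E where "E i = {\<theta>. p i < \<theta> \<and> \<theta> \<le> p (Suc i) \<and> p (Suc i) - \<theta> \<in> A}" for i
  have eq: "{\<theta>\<in>{0<..1}. Lz (shift \<theta> g) 0 T \<in> ereal ` A} = (\<Union>i\<in>{..<n}. E i)"
  proof (intro set_eqI iffI)
    fix \<theta> assume "\<theta> \<in> {\<theta>\<in>{0<..1}. Lz (shift \<theta> g) 0 T \<in> ereal ` A}"
    hence th: "0 < \<theta>" "\<theta> \<le> 1" "Lz (shift \<theta> g) 0 T \<in> ereal ` A" by auto
    obtain i where i: "i < n" "p i < \<theta>" "\<theta> \<le> p (Suc i)" using cover[of n \<theta>] th pn by auto
    have "p (Suc i) - \<theta> \<in> A" using th(3) Lz_formula[OF i] by auto
    thus "\<theta> \<in> (\<Union>i\<in>{..<n}. E i)" using i unfolding E_def by auto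
  next
    fix \<theta> assume "\<theta> \<in> (\<Union>i\<in>{..<n}. E i)"
    then obtain i where i: "i < n" "p i < \<theta>" "\<theta> \<le> p (Suc i)" "p (Suc i) - \<theta> \<in> A" unfolding E_def by auto
    have "0 < \<theta>" "\<theta> \<le> 1" using i p_range[of i] p_range[of "Suc i"] by auto
    thus "\<theta> \<in> {\<theta>\<in>{0<..1}. Lz (shift \<theta> g) 0 T \<in> ereal ` A}" using Lz_formula[OF i(1-3)] i(4) by auto
  qed
  have Em: "E i \<in> sets borel" for i unfolding E_def using A by measurable
  have disj: "disjoint_family_on E {..<n}"
    unfolding disjoint_family_on_def E_def
  proof (intro ballI impI set_eqI iffI)
    fix i j x assume ij: "i \<in> {..<n}" "j \<in> {..<n}" "i \<noteq> j"
      and x: "x \<in> {\<theta>. p i < \<theta> \<and> \<theta> \<le> p (Suc i) \<and> p (Suc i) - \<theta> \<in> A} \<inter> {\<theta>. p j < \<theta> \<and> \<theta> \<le> p (Suc j) \<and> p (Suc j) - \<theta> \<in> A}"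
    show "x \<in> {}"
    proof (cases "i < j")
      case True thus ?thesis using mono_le[of "Suc i" j] ij x by auto
    next
      case False thus ?thesis using mono_le[of "Suc j" i] ij x by auto
    qed
  qed auto
  have "emeasure lborel (\<Union>i\<in>{..<n}. E i) = (\<Sum>i<n. emeasure lborel (E i))"
    using Em disj by (subst sum_emeasure) auto
  also have "\<dots> = (\<Sum>i<n. emeasure lborel (A \<inter> {..< p (Suc i) - p i}))"
  proof (rule sum.cong[OF refl])
    fix i assume "i \<in> {..<n}"
    have "E i = (\<lambda>x. p (Suc i) - x) -` (A \<inter> {..< p (Suc i) - p i})"
      unfolding E_def using A(2) by auto
    thus "emeasure lborel (E i) = emeasure lborel (A \<inter> {..< p (Suc i) - p i})"
      using lborel_reflect[of "A \<inter> {..< p (Suc i) - p i}" "p (Suc i)"] A by auto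
  qed
  finally show ?thesis unfolding eq .
qed

end



definition Gf :: "(nat \<Rightarrow> real) \<Rightarrow> nat \<Rightarrow> real \<Rightarrow> real" where
  "Gf p n y = (\<Prod>i<n. (sin (pi * (y - p i)))^2)"

lemma Gf_Hper: "Gf p n \<in> Hper"
  unfolding Hper_def Gf_def
proof (intro CollectI conjI allI)
  show "continuous_on UNIV (\<lambda>y. \<Prod>i<n. (sin (pi * (y - p i)))\<^sup>2)"
    by (intro continuous_intros)
  fix x
  have "(sin (pi * (x + 1 - p i)))^2 = (sin (pi * (x - p i)))^2" for i
  proof -
    have "pi * (x + 1 - p i) = pi * (x - p i) + pi" by (simp add: algebra_simps)
    thus ?thesis by (simp add: sin_add)
  qed
  thus "(\<Prod>i<n. (sin (pi * (x + 1 - p i)))\<^sup>2) = (\<Prod>i<n. (sin (pi * (x - p i)))\<^sup>2)" by simp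
qed

lemma Zs_Gf: "Zs (Gf p n) = {x. \<exists>i<n. \<exists>k::int. x = p i + k}"
proof -
  have "sin (pi * (x - p i)) = 0 \<longleftrightarrow> (\<exists>k::int. x = p i + k)" for x i
  proof -
    have "pi * (x - p i) = of_int k * pi \<longleftrightarrow> x = p i + k" for k :: int
    proof -
      have "pi * (x - p i) = of_int k * pi \<longleftrightarrow> pi * (x - p i - of_int k) = 0" by (simp add: algebra_simps)
      also have "\<dots> \<longleftrightarrow> x = p i + k" by auto
      finally show ?thesis .
    qed
    thus ?thesis unfolding sin_zero_iff_int2 by auto
  qed
  thus ?thesis unfolding Zs_def Gf_def by auto
qed

lemma Zs_const1: "Zs (\<lambda>_. 1) = {}" unfolding Zs_def by simp

lemma Hper_const: "(\<lambda>_. c) \<in> Hper" unfolding Hper_def by auto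

lemma Gf_meas[measurable]:
  assumes [measurable]: "\<And>i. (\<lambda>s. p s i) \<in> borel_measurable M" "f \<in> borel_measurable M"
  shows "(\<lambda>s. Gf (p s) n (f s)) \<in> borel_measurable M"
  unfolding Gf_def by measurable




lemma sum_alt: "(\<Sum>i<2*m. F (if even i then x else y)) = of_nat m * (F x + F y :: 'a::comm_semiring_1)"
proof (induction m)
  case (Suc m)
  have "{..<2 * Suc m} = insert (2*m+1) (insert (2*m) {..<2*m})" by auto
  thus ?case using Suc by (simp add: algebra_simps)
qed simp

locale prm =
  fixes b c T :: real
  assumes T: "0 < T" "T \<le> 1" and b: "0 < b" "b \<le> T" and c: "0 < c" and rho1: "c * b^2 / 2 \<le> 1"
begin

definition "rho = c * b^2 / 2"
definition "K = nat \<lfloor>1/b\<rfloor>"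
definition "r = 1 - real K * b"
definition "q1 = rho * r / b"
definition "q2 = rho - q1"
definition "gp m t a1 a2 i = (if i < 2*m then (if even i then b*t else b - b*t) else if i = 2*m then a1 else if i = 2*m+1 then a2 else 0)"
definition "gap s i = (if s < q1 then gp K (s/q1) (r*(s/q1)) (r - r*(s/q1)) i
   else if s < rho then gp (K-1) ((s-q1)/q2) (r + (b-r)*((s-q1)/q2)) (b - (b-r)*((s-q1)/q2)) i else 0)"
definition "nn = 2*K+2"
definition "pts s i = (\<Sum>j<i. gap s j)"
definition "Gs s = (if s < rho then Gf (pts s) nn else (\<lambda>_. 1))"

lemma rho_pos: "0 < rho" and rho_le: "rho \<le> 1" using b c rho1 unfolding rho_def by auto

lemma K_ge1: "1 \<le> K"
proof -
  have "1 \<le> 1 / b" using b T by simp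
  thus ?thesis unfolding K_def by linarith
qed

lemma r_bounds: "0 \<le> r" "r < b"
proof -
  have fl: "real_of_int \<lfloor>1/b\<rfloor> \<le> 1/b" "1/b < real_of_int \<lfloor>1/b\<rfloor> + 1" by linarith+
  have Kf: "real K = real_of_int \<lfloor>1/b\<rfloor>" unfolding K_def using K_ge1 unfolding K_def by simp
  have "real_of_int \<lfloor>1/b\<rfloor> * b \<le> (1/b) * b" by (rule mult_right_mono[OF fl(1)]) (use b in simp)
  hence "real K * b \<le> 1" using b unfolding Kf by simp
  thus "0 \<le> r" unfolding r_def by simp
  have "(1/b) * b < (real_of_int \<lfloor>1/b\<rfloor> + 1) * b" by (rule mult_strict_right_mono[OF fl(2)]) (use b in simp)
  hence "1 < (real K + 1) * b" using b unfolding Kf by simp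
  thus "r < b" unfolding r_def by (simp add: algebra_simps)
qed

lemma q_bounds: "0 \<le> q1" "0 < q2" "q1 + q2 = rho" "q2 = rho * (b - r) / b"
  using rho_pos r_bounds b unfolding q1_def q2_def by (auto simp: field_simps)

lemma Kb_r: "real K * b + r = 1" unfolding r_def by simp

lemma sum_gp:
  assumes "2*m+2 \<le> N" "F 0 = 0"
  shows "(\<Sum>i<N. F (gp m t a1 a2 i)) = of_nat m * (F (b*t) + F (b - b*t)) + F a1 + (F a2 :: 'a::comm_semiring_1)"
proof -
  have N: "{..<N} = {..<2*m} \<union> {2*m, 2*m+1} \<union> {2*m+2..<N}" using assms by auto
  have "(\<Sum>i<N. F (gp m t a1 a2 i)) = (\<Sum>i<2*m. F (gp m t a1 a2 i)) + (\<Sum>i\<in>{2*m, 2*m+1}. F (gp m t a1 a2 i))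
     + (\<Sum>i\<in>{2*m+2..<N}. F (gp m t a1 a2 i))"
    unfolding N by (subst sum.union_disjoint, auto simp: ac_simps)+
  also have "(\<Sum>i\<in>{2*m+2..<N}. F (gp m t a1 a2 i)) = 0" using assms(2) by (intro sum.neutral) (auto simp: gp_def)
  also have "(\<Sum>i<2*m. F (gp m t a1 a2 i)) = (\<Sum>i<2*m. F (if even i then b*t else b - b*t))"
    by (intro sum.cong) (auto simp: gp_def)
  also have "(\<Sum>i\<in>{2*m, 2*m+1}. F (gp m t a1 a2 i)) = F a1 + F a2" by (simp add: gp_def)
  finally show ?thesis by (simp add: sum_alt add.assoc)
qed

lemma gap_type1: "s < q1 \<Longrightarrow> gap s i = gp K (s/q1) (r*(s/q1)) (r - r*(s/q1)) i" unfolding gap_def by simp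
lemma gap_type2: "q1 \<le> s \<Longrightarrow> s < rho \<Longrightarrow> gap s i = gp (K-1) ((s-q1)/q2) (r + (b-r)*((s-q1)/q2)) (b - (b-r)*((s-q1)/q2)) i"
  unfolding gap_def by simp

lemma sum_gap:
  assumes "F 0 = 0" "0 \<le> s"
  shows "(\<Sum>i<nn. F (gap s i)) = (if s < q1 then of_nat K * (F (b*(s/q1)) + F (b - b*(s/q1))) + F (r*(s/q1)) + F (r - r*(s/q1))
     else if s < rho then of_nat (K-1) * (F (b*((s-q1)/q2)) + F (b - b*((s-q1)/q2))) + F (r + (b-r)*((s-q1)/q2)) + (F (b - (b-r)*((s-q1)/q2)) :: 'a::comm_semiring_1)
     else 0)"
proof -
  consider "s < q1" | "q1 \<le> s" "s < rho" | "rho \<le> s" by linarith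
  thus ?thesis
  proof cases
    case 1 thus ?thesis unfolding gap_type1[OF 1] by (subst sum_gp) (auto simp: nn_def assms)
  next
    case 2 thus ?thesis unfolding gap_type2[OF 2] using K_ge1 q_bounds
      by (subst sum_gp) (auto simp: nn_def assms)
  next
    case 3 thus ?thesis using q_bounds by (simp add: gap_def assms)
  qed
qed

lemma gap_bounds:
  assumes "0 \<le> s" "s < rho"
  shows "0 \<le> gap s i" "gap s i \<le> b"
proof -
  have rb: "0 \<le> r" "r < b" by (rule r_bounds)+
  have ba: "0 \<le> b * t" "b * t \<le> b" if "0 \<le> t" "t \<le> 1" for t
    using that b by (auto intro: mult_left_le)
  consider "s < q1" | "q1 \<le> s" "s < rho" using assms by linarith
  hence "0 \<le> gap s i \<and> gap s i \<le> b"
  proof cases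
    case 1
    define t where "t = s/q1"
    have t: "0 \<le> t" "t \<le> 1" using 1 assms q_bounds unfolding t_def by auto
    have "0 \<le> r * t" "r * t \<le> r" using t rb by (auto intro: mult_left_le)
    thus ?thesis unfolding gap_type1[OF 1] t_def[symmetric] gp_def using ba[OF t] rb by auto
  next
    case 2
    define t where "t = (s-q1)/q2"
    have q2: "0 < q2" "s - q1 \<le> q2" using 2 q_bounds by auto
    have t: "0 \<le> t" "t \<le> 1" using 2 q2 unfolding t_def by auto
    have h1: "0 \<le> (b - r) * t" using t rb by auto
    have h2: "(b-r) * t \<le> b - r" using t rb by (intro mult_left_le) auto
    show ?thesis unfolding gap_type2[OF 2] t_def[symmetric] gp_def using ba[OF t] rb h1 by auto (use h2 in linarith)+
  qed
  thus "0 \<le> gap s i" "gap s i \<le> b" by auto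
qed

lemma pts_n: assumes "0 \<le> s" "s < rho" shows "pts s nn = 1"
proof -
  have "pts s nn = (\<Sum>i<nn. id (gap s i))" unfolding pts_def by simp
  also have "\<dots> = 1" using assms Kb_r K_ge1 q_bounds
    by (subst sum_gap) (auto simp: algebra_simps of_nat_diff)
  finally show ?thesis .
qed

lemma cfg_s: assumes "0 \<le> s" "s < rho" shows "cfg (pts s) nn T (Gs s)"
proof
  show "0 < nn" unfolding nn_def by simp
  show "pts s 0 = 0" unfolding pts_def by simp
  show "pts s nn = 1" using pts_n[OF assms] .
  fix i
  have d: "pts s (Suc i) - pts s i = gap s i" unfolding pts_def by simp
  show "pts s i \<le> pts s (Suc i)" using d gap_bounds(1)[OF assms, of i] by simp
  show "pts s (Suc i) - pts s i \<le> T" using d gap_bounds(2)[OF assms, of i] b by simp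
next
  show "Gs s \<in> Hper" using assms by (simp add: Gs_def Gf_Hper)
  show "Zs (Gs s) = {x. \<exists>i<nn. \<exists>k::int. x = pts s i + k}" using assms by (simp add: Gs_def Zs_Gf)
qed

lemma Gs_Hper: "Gs s \<in> Hper" by (simp add: Gs_def Gf_Hper Hper_const)

end



definition cl :: "real \<Rightarrow> real" where "cl y = max 0 (min 1 y)"

lemma em_Ico: "emeasure lborel {a..<e::real} = ennreal (max 0 (e - a))"
  by (cases "a \<le> e") auto
lemma em_Ioo: "emeasure lborel {a<..<e::real} = ennreal (max 0 (e - a))"
  by (cases "a \<le> e") auto

lemma em_gt: "emeasure lborel {s::real. a \<le> s \<and> s < e \<and> z < s} = ennreal (max 0 (e - max a z))"
proof (cases "z < a")
  case True
  hence "{s::real. a \<le> s \<and> s < e \<and> z < s} = {a..<e}" by auto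
  thus ?thesis using True em_Ico by simp
next
  case False
  hence "{s::real. a \<le> s \<and> s < e \<and> z < s} = {z<..<e}" by auto
  thus ?thesis using False em_Ioo by simp
qed

lemma em_lt: "emeasure lborel {s::real. a \<le> s \<and> s < e \<and> s < z} = ennreal (max 0 (min e z - a))"
proof -
  have "{s::real. a \<le> s \<and> s < e \<and> s < z} = {a..<min e z}" by auto
  thus ?thesis using em_Ico by simp
qed

lemma cl_inc: assumes "0 < h" shows "max 0 (h * (1 - max 0 w)) = h * cl (1 - w)"
proof -
  consider "w \<le> 0" | "0 < w" "w \<le> 1" | "1 < w" by linarith
  thus ?thesis
  proof cases
    case 1 thus ?thesis using assms by (simp add: cl_def max_def min_def)
  next
    case 2 thus ?thesis using assms by (simp add: cl_def max_def min_def)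
  next
    case 3
    hence "h * (1 - w) < 0" using assms by (simp add: mult_pos_neg)
    thus ?thesis using 3 by (simp add: cl_def max_def min_def)
  qed
qed

lemma cl_dec: assumes "0 < h" shows "max 0 (h * min 1 w) = h * cl w"
proof -
  consider "w \<le> 0" | "0 < w" "w \<le> 1" | "1 < w" by linarith
  thus ?thesis
  proof cases
    case 1
    hence "h * w \<le> 0" using assms by (simp add: mult_nonneg_nonpos)
    thus ?thesis using 1 by (simp add: cl_def max_def min_def)
  next
    case 2 thus ?thesis using assms by (simp add: cl_def max_def min_def)
  next
    case 3 thus ?thesis using assms by (simp add: cl_def max_def min_def)
  qed
qed

lemma meas_inc:
  assumes h: "0 \<le> h" and hb: "h = 0 \<or> 0 < \<beta>"
  shows "emeasure lborel {s. lo \<le> s \<and> s < lo + h \<and> x < \<alpha> + \<beta> * ((s - lo) / h)} = ennreal (h * cl ((\<alpha> + \<beta> - x) / \<beta>))"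
proof (cases "h = 0")
  case True
  hence "{s. lo \<le> s \<and> s < lo + h \<and> x < \<alpha> + \<beta> * ((s - lo) / h)} = {}" by auto
  thus ?thesis using True by (metis emeasure_empty mult_zero_left ennreal_0)
next
  case False
  hence hp: "0 < h" and bp: "0 < \<beta>" using h hb by auto
  define z where "z = lo + h * ((x - \<alpha>) / \<beta>)"
  have iff: "x < \<alpha> + \<beta> * ((s - lo) / h) \<longleftrightarrow> z < s" for s
  proof -
    have "x < \<alpha> + \<beta> * ((s - lo) / h) \<longleftrightarrow> (x - \<alpha>) / \<beta> < (s - lo) / h" using bp by (simp add: field_simps)
    also have "\<dots> \<longleftrightarrow> h * ((x - \<alpha>) / \<beta>) < s - lo" using hp by (simp add: field_simps)
    finally show ?thesis unfolding z_def by linarith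
  qed
  have "{s. lo \<le> s \<and> s < lo + h \<and> x < \<alpha> + \<beta> * ((s - lo) / h)} = {s. lo \<le> s \<and> s < lo + h \<and> z < s}"
    using iff by auto
  also have "emeasure lborel \<dots> = ennreal (max 0 (lo + h - max lo z))" by (rule em_gt)
  also have "max 0 (lo + h - max lo z) = h * cl ((\<alpha> + \<beta> - x) / \<beta>)"
  proof -
    define w where "w = (x - \<alpha>) / \<beta>"
    have w2: "(\<alpha> + \<beta> - x) / \<beta> = 1 - w" unfolding w_def using bp by (simp add: field_simps)
    have "lo + h - max lo z = h * (1 - max 0 w)"
    proof (cases "0 \<le> w")
      case True hence "0 \<le> h * w" using hp by simp
      thus ?thesis using True unfolding z_def w_def[symmetric] by (simp add: max_def algebra_simps)
    next
      case False hence "h * w < 0" using hp by (simp add: mult_pos_neg)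
      thus ?thesis using False unfolding z_def w_def[symmetric] by (simp add: max_def algebra_simps)
    qed
    thus ?thesis unfolding w2 using cl_inc[OF hp] by simp
  qed
  finally show ?thesis .
qed

lemma meas_dec:
  assumes h: "0 \<le> h" and hb: "h = 0 \<or> 0 < \<beta>"
  shows "emeasure lborel {s. lo \<le> s \<and> s < lo + h \<and> x < \<alpha> - \<beta> * ((s - lo) / h)} = ennreal (h * cl ((\<alpha> - x) / \<beta>))"
proof (cases "h = 0")
  case True
  hence "{s. lo \<le> s \<and> s < lo + h \<and> x < \<alpha> - \<beta> * ((s - lo) / h)} = {}" by auto
  thus ?thesis using True by (metis emeasure_empty mult_zero_left ennreal_0)
next
  case False
  hence hp: "0 < h" and bp: "0 < \<beta>" using h hb by auto
  define z where "z = lo + h * ((\<alpha> - x) / \<beta>)"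
  have iff: "x < \<alpha> - \<beta> * ((s - lo) / h) \<longleftrightarrow> s < z" for s
  proof -
    have "x < \<alpha> - \<beta> * ((s - lo) / h) \<longleftrightarrow> (s - lo) / h < (\<alpha> - x) / \<beta>" using bp by (simp add: field_simps)
    also have "\<dots> \<longleftrightarrow> s - lo < h * ((\<alpha> - x) / \<beta>)" using hp by (simp add: field_simps)
    finally show ?thesis unfolding z_def by linarith
  qed
  have "{s. lo \<le> s \<and> s < lo + h \<and> x < \<alpha> - \<beta> * ((s - lo) / h)} = {s. lo \<le> s \<and> s < lo + h \<and> s < z}"
    using iff by auto
  also have "emeasure lborel \<dots> = ennreal (max 0 (min (lo + h) z - lo))" by (rule em_lt)
  also have "max 0 (min (lo + h) z - lo) = h * cl ((\<alpha> - x) / \<beta>)"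
  proof -
    define w where "w = (\<alpha> - x) / \<beta>"
    have "min (lo + h) z - lo = h * min 1 w"
    proof (cases "w \<le> 1")
      case True hence "h * w \<le> h" using hp by (simp add: mult_left_le)
      thus ?thesis using True unfolding z_def w_def[symmetric] by (simp add: min_def algebra_simps)
    next
      case False hence "h < h * w" using hp by simp
      thus ?thesis using False unfolding z_def w_def[symmetric] by (simp add: min_def algebra_simps)
    qed
    thus ?thesis unfolding w_def[symmetric] using cl_dec[OF hp] by simp
  qed
  finally show ?thesis .
qed




context prm begin

definition "cnt s x = (\<Sum>i<nn. indicator {..<gap s i} x :: ennreal)"

lemma real_identity:
  assumes x: "0 < x"
  shows "2 * real K * q1 * cl ((b - x)/b) + 2 * q1 * cl ((r - x)/r) + 2 * real (K - 1) * q2 * cl ((b - x)/b)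
     + 2 * q2 * cl ((b - x)/(b - r)) = (if x < b then c * (b - x) else 0)"
proof -
  have rb: "0 \<le> r" "r < b" by (rule r_bounds)+
  have q: "q1 = rho * r / b" "q2 = rho * (b - r) / b" using q_bounds unfolding q1_def by auto
  have K1: "real (K - 1) = real K - 1" using K_ge1 by (simp add: of_nat_diff)
  have Kb: "real K * b + r = 1" by (rule Kb_r)
  show ?thesis
  proof (cases "x < b")
    case False
    have "cl ((b - x)/b) = 0" "cl ((b - x)/(b - r)) = 0" using False b rb
      by (auto simp: cl_def divide_nonpos_pos)
    moreover have "cl ((r - x)/r) = 0" using False rb x
      by (cases "r = 0") (auto simp: cl_def divide_nonpos_pos)
    ultimately show ?thesis using False by simp
  next
    case True
    have c1: "cl ((b - x)/b) = (b - x)/b" using True b x by (auto simp: cl_def field_simps)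
    show ?thesis
    proof (cases "x \<le> r")
      case xr: True
      have c2: "cl ((b - x)/(b - r)) = 1" using xr rb True by (auto simp: cl_def field_simps)
      have c3: "cl ((r - x)/r) = (r - x)/r" using xr rb x by (auto simp: cl_def field_simps)
      have rp: "0 < r" using xr x by simp
      have "2 * real K * q1 * ((b - x)/b) + 2 * q1 * ((r - x)/r) + 2 * (real K - 1) * q2 * ((b - x)/b)
          + 2 * q2 * 1 = 2 * rho / b * ((b - x) / b) * (real K * b + r)"
        unfolding q using b rp rb by (simp add: field_simps)
      also have "\<dots> = c * (b - x)" unfolding Kb rho_def using b by (simp add: field_simps power2_eq_square)
      finally show ?thesis unfolding c1 c2 c3 K1 using True by simp
    next
      case xr: False
      have c2: "cl ((b - x)/(b - r)) = (b - x)/(b - r)" using xr rb True by (auto simp: cl_def field_simps)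
      have c3: "cl ((r - x)/r) = 0" using xr rb x by (cases "r = 0") (auto simp: cl_def divide_nonpos_pos)
      have "2 * real K * q1 * ((b - x)/b) + 2 * q1 * 0 + 2 * (real K - 1) * q2 * ((b - x)/b)
          + 2 * q2 * ((b - x)/(b - r)) = 2 * rho / b * ((b - x) / b) * (real K * b + r)"
        unfolding q using b rb by (simp add: field_simps)
      also have "\<dots> = c * (b - x)" unfolding Kb rho_def using b by (simp add: field_simps power2_eq_square)
      finally show ?thesis unfolding c1 c2 c3 K1 using True by simp
    qed
  qed
qed

lemma cnt_decomp:
  assumes x: "0 < x"
  shows "indicator {0..1} s * cnt s x =
     of_nat K * indicator {s. 0 \<le> s \<and> s < q1 \<and> x < b*(s/q1)} s
   + of_nat K * indicator {s. 0 \<le> s \<and> s < q1 \<and> x < b - b*(s/q1)} s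
   + indicator {s. 0 \<le> s \<and> s < q1 \<and> x < r*(s/q1)} s
   + indicator {s. 0 \<le> s \<and> s < q1 \<and> x < r - r*(s/q1)} s
   + of_nat (K-1) * indicator {s. q1 \<le> s \<and> s < rho \<and> x < b*((s-q1)/q2)} s
   + of_nat (K-1) * indicator {s. q1 \<le> s \<and> s < rho \<and> x < b - b*((s-q1)/q2)} s
   + indicator {s. q1 \<le> s \<and> s < rho \<and> x < r + (b-r)*((s-q1)/q2)} s
   + (indicator {s. q1 \<le> s \<and> s < rho \<and> x < b - (b-r)*((s-q1)/q2)} s :: ennreal)"
proof -
  have q: "0 \<le> q1" "q1 \<le> rho" "rho \<le> 1" using q_bounds rho_le by auto
  show ?thesis
  proof (cases "0 \<le> s \<and> s \<le> 1")
    case False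
    thus ?thesis using q by (auto simp: indicator_def)
  next
    case True
    have F0: "indicator {..<0::real} x = (0::ennreal)" using x by simp
    have s0: "0 \<le> s" using True by simp
    have cs: "cnt s x = (\<Sum>i<nn. (\<lambda>l. indicator {..<l} x :: ennreal) (gap s i))" unfolding cnt_def by simp
    show ?thesis unfolding cs sum_gap[where F="\<lambda>l. indicator {..<l} x", OF F0 s0] using True q by (auto simp: indicator_def mult_2_right)
  qed
qed

lemma W_eq:
  assumes x: "0 < x"
  shows "(\<integral>\<^sup>+ s. indicator {0..1} s * cnt s x \<partial>lborel) = ennreal (if x < b then c * (b - x) else 0)"
proof -
  have rb: "0 \<le> r" "r < b" by (rule r_bounds)+
  have qb: "0 \<le> q1" "0 < q2" "q1 + q2 = rho" using q_bounds by auto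
  have q1r: "q1 = 0 \<or> 0 < r" using rb unfolding q1_def by auto
  define S1 where "S1 = {s. 0 \<le> s \<and> s < q1 \<and> x < b*(s/q1)}"
  define S2 where "S2 = {s. 0 \<le> s \<and> s < q1 \<and> x < b - b*(s/q1)}"
  define S3 where "S3 = {s. 0 \<le> s \<and> s < q1 \<and> x < r*(s/q1)}"
  define S4 where "S4 = {s. 0 \<le> s \<and> s < q1 \<and> x < r - r*(s/q1)}"
  define S5 where "S5 = {s. q1 \<le> s \<and> s < rho \<and> x < b*((s-q1)/q2)}"
  define S6 where "S6 = {s. q1 \<le> s \<and> s < rho \<and> x < b - b*((s-q1)/q2)}"
  define S7 where "S7 = {s. q1 \<le> s \<and> s < rho \<and> x < r + (b-r)*((s-q1)/q2)}"
  define S8 where "S8 = {s. q1 \<le> s \<and> s < rho \<and> x < b - (b-r)*((s-q1)/q2)}"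
  have meas: "S1 \<in> sets lborel" "S2 \<in> sets lborel" "S3 \<in> sets lborel" "S4 \<in> sets lborel"
     "S5 \<in> sets lborel" "S6 \<in> sets lborel" "S7 \<in> sets lborel" "S8 \<in> sets lborel"
    unfolding S1_def S2_def S3_def S4_def S5_def S6_def S7_def S8_def by measurable
  have m1: "emeasure lborel S1 = ennreal (q1 * cl ((b - x)/b))"
    using meas_inc[of q1 b 0 x 0] qb b unfolding S1_def by simp
  have m2: "emeasure lborel S2 = ennreal (q1 * cl ((b - x)/b))"
    using meas_dec[of q1 b 0 x b] qb b unfolding S2_def by simp
  have m3: "emeasure lborel S3 = ennreal (q1 * cl ((r - x)/r))"
    using meas_inc[of q1 r 0 x 0] qb q1r unfolding S3_def by simp
  have m4: "emeasure lborel S4 = ennreal (q1 * cl ((r - x)/r))"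
    using meas_dec[of q1 r 0 x r] qb q1r unfolding S4_def by simp
  have m5: "emeasure lborel S5 = ennreal (q2 * cl ((b - x)/b))"
    using meas_inc[of q2 b q1 x 0] qb b unfolding S5_def by simp
  have m6: "emeasure lborel S6 = ennreal (q2 * cl ((b - x)/b))"
    using meas_dec[of q2 b q1 x b] qb b unfolding S6_def by simp
  have m7: "emeasure lborel S7 = ennreal (q2 * cl ((b - x)/(b - r)))"
    using meas_inc[of q2 "b - r" q1 x r] qb rb unfolding S7_def by simp
  have m8: "emeasure lborel S8 = ennreal (q2 * cl ((b - x)/(b - r)))"
    using meas_dec[of q2 "b - r" q1 x b] qb rb unfolding S8_def by simp
  have cd: "indicator {0..1} s * cnt s x = of_nat K * indicator S1 s + of_nat K * indicator S2 s
     + indicator S3 s + indicator S4 s + of_nat (K-1) * indicator S5 s + of_nat (K-1) * indicator S6 s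
     + indicator S7 s + indicator S8 s" for s
    unfolding cnt_decomp[OF x] S1_def S2_def S3_def S4_def S5_def S6_def S7_def S8_def ..
  have "(\<integral>\<^sup>+ s. indicator {0..1} s * cnt s x \<partial>lborel) =
      of_nat K * emeasure lborel S1 + of_nat K * emeasure lborel S2
    + emeasure lborel S3 + emeasure lborel S4
    + of_nat (K-1) * emeasure lborel S5 + of_nat (K-1) * emeasure lborel S6
    + emeasure lborel S7 + emeasure lborel S8"
    unfolding cd using meas by (simp add: nn_integral_add nn_integral_cmult)
  also have "\<dots> = of_nat K * ennreal (q1 * cl ((b - x)/b)) + of_nat K * ennreal (q1 * cl ((b - x)/b))
    + ennreal (q1 * cl ((r - x)/r)) + ennreal (q1 * cl ((r - x)/r))
    + of_nat (K-1) * ennreal (q2 * cl ((b - x)/b)) + of_nat (K-1) * ennreal (q2 * cl ((b - x)/b))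
    + ennreal (q2 * cl ((b - x)/(b - r))) + ennreal (q2 * cl ((b - x)/(b - r)))"
    unfolding m1 m2 m3 m4 m5 m6 m7 m8 ..
  also have "\<dots> = ennreal (2 * real K * q1 * cl ((b - x)/b) + 2 * q1 * cl ((r - x)/r) + 2 * real (K - 1) * q2 * cl ((b - x)/b)
     + 2 * q2 * cl ((b - x)/(b - r)))"
  proof -
    have nn: "0 \<le> cl y" for y unfolding cl_def by simp
    have p: "0 \<le> q1 * cl y" "0 \<le> q2 * cl y" for y using nn qb by auto
    have e: "of_nat m * ennreal a = ennreal (real m * a)" if "0 \<le> a" for m a
      using that by (simp add: ennreal_of_nat_eq_real_of_nat ennreal_mult)
    have s8: "ennreal a1 + ennreal a2 + ennreal a3 + ennreal a4 + ennreal a5 + ennreal a6 + ennreal a7 + ennreal a8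
       = ennreal (a1 + a2 + a3 + a4 + a5 + a6 + a7 + a8)"
      if "0 \<le> a1" "0 \<le> a2" "0 \<le> a3" "0 \<le> a4" "0 \<le> a5" "0 \<le> a6" "0 \<le> a7" "0 \<le> a8" for a1 a2 a3 a4 a5 a6 a7 a8
      using that by (simp add: ennreal_plus)
    show ?thesis
      apply (simp only: e[OF p(1)] e[OF p(2)])
      apply (subst s8)
      using p nn apply (simp_all add: zero_le_mult_iff)
      by (simp add: algebra_simps)
  qed
  also have "\<dots> = ennreal (if x < b then c * (b - x) else 0)" using real_identity[OF x] by simp
  finally show ?thesis .
qed

end



definition wrap :: "real \<Rightarrow> real" where "wrap y = y - of_int \<lceil>y\<rceil> + 1"

lemma wrap_int: "wrap (y + of_int k) = wrap y"
  unfolding wrap_def by simp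

lemma wrap_id: "0 < z \<Longrightarrow> z \<le> 1 \<Longrightarrow> wrap z = z"
  unfolding wrap_def by (simp add: ceiling_eq_iff)

lemma wrap_id2: "1 < z \<Longrightarrow> z \<le> 2 \<Longrightarrow> wrap z = z - 1"
proof -
  assume "1 < z" "z \<le> 2"
  hence "\<lceil>z\<rceil> = 2" by (simp add: ceiling_eq_iff)
  thus ?thesis unfolding wrap_def by simp
qed

lemma wrap_range: "0 < wrap y" "wrap y \<le> 1"
  unfolding wrap_def by linarith+

lemma wrap_diff: "y - wrap y = of_int (\<lceil>y\<rceil> - 1)"
  unfolding wrap_def by simp

lemma Hper_int: "g \<in> Hper \<Longrightarrow> g (x + of_int k) = g x"
proof -
  assume g: "g \<in> Hper"
  have P: "\<forall>x. g (x + 1) = g x" using g by (simp add: Hper_def)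
  have pos: "g (x + real n) = g x" for x n
    by (induction n arbitrary: x) (use P in \<open>auto simp: add.assoc[symmetric]\<close>)
  show ?thesis
  proof (cases "0 \<le> k")
    case True thus ?thesis using pos[of x "nat k"] by simp
  next
    case False
    have "g (x + of_int k + real (nat (- k))) = g (x + of_int k)" by (rule pos)
    thus ?thesis using False by simp
  qed
qed

lemma lborel_transl: "B \<in> sets borel \<Longrightarrow> emeasure lborel ((\<lambda>x. t + x) -` B) = emeasure lborel (B::real set)"
proof -
  assume B: "B \<in> sets borel"
  have "emeasure lborel B = emeasure (distr lborel borel ((+) t)) B" by (simp add: lborel_distr_plus)
  also have "\<dots> = emeasure lborel ((+) t -` B)" using B by (subst emeasure_distr) auto
  finally show ?thesis by simp
qed

definition "Uth = density lborel (indicator {0<..1::real})"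
definition "Us = density lborel (indicator {0..1::real})"

lemma emeasure_Uth: "S \<in> sets borel \<Longrightarrow> emeasure Uth S = emeasure lborel ({0<..1} \<inter> S)"
proof -
  assume S: "S \<in> sets borel"
  have "emeasure Uth S = (\<integral>\<^sup>+ x. indicator {0<..1} x * indicator S x \<partial>lborel)"
    unfolding Uth_def using S by (subst emeasure_density) auto
  also have "\<dots> = (\<integral>\<^sup>+ x. indicator ({0<..1} \<inter> S) x \<partial>lborel)"
    by (intro nn_integral_cong) (simp split: split_indicator)
  also have "\<dots> = emeasure lborel ({0<..1} \<inter> S)" using S by (intro nn_integral_indicator) auto
  finally show ?thesis .
qed

lemma emeasure_Us: "S \<in> sets borel \<Longrightarrow> emeasure Us S = emeasure lborel ({0..1} \<inter> S)"
proof -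
  assume S: "S \<in> sets borel"
  have "emeasure Us S = (\<integral>\<^sup>+ x. indicator {0..1} x * indicator S x \<partial>lborel)"
    unfolding Us_def using S by (subst emeasure_density) auto
  also have "\<dots> = (\<integral>\<^sup>+ x. indicator ({0..1} \<inter> S) x \<partial>lborel)"
    by (intro nn_integral_cong) (simp split: split_indicator)
  also have "\<dots> = emeasure lborel ({0..1} \<inter> S)" using S by (intro nn_integral_indicator) auto
  finally show ?thesis .
qed

lemma sets_Uth[simp]: "sets Uth = sets borel" and sets_Us[simp]: "sets Us = sets borel"
  unfolding Uth_def Us_def by auto

lemma prob_Uth: "prob_space Uth"
proof (rule prob_spaceI)
  have sp: "space Uth = UNIV" unfolding Uth_def by simp
  show "emeasure Uth (space Uth) = 1" unfolding sp by (subst emeasure_Uth) auto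
qed

lemma prob_Us: "prob_space Us"
proof (rule prob_spaceI)
  have sp: "space Us = UNIV" unfolding Us_def by simp
  show "emeasure Us (space Us) = 1" unfolding sp by (subst emeasure_Us) auto
qed

lemma wrap_meas[measurable]: "wrap \<in> borel_measurable borel"
  unfolding wrap_def by measurable

lemma Uth_invariant: "distr Uth borel (\<lambda>\<theta>. wrap (\<theta> + c)) = Uth"
proof (rule measure_eqI)
  show "sets (distr Uth borel (\<lambda>\<theta>. wrap (\<theta> + c))) = sets Uth" by simp
  fix B assume "B \<in> sets (distr Uth borel (\<lambda>\<theta>. wrap (\<theta> + c)))"
  hence B: "B \<in> sets borel" by simp
  define c0 where "c0 = wrap c"
  have c0: "0 < c0" "c0 \<le> 1" unfolding c0_def by (rule wrap_range)+
  have wc: "wrap (\<theta> + c) = wrap (\<theta> + c0)" for \<theta>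
  proof -
    have "\<theta> + c = \<theta> + c0 + of_int (\<lceil>c\<rceil> - 1)" using wrap_diff[of c] unfolding c0_def by simp
    thus ?thesis using wrap_int by metis
  qed
  have sp: "space Uth = UNIV" unfolding Uth_def by simp
  have mc: "borel_measurable Uth = borel_measurable borel" by (rule measurable_cong_sets) simp_all
  have "emeasure (distr Uth borel (\<lambda>\<theta>. wrap (\<theta> + c))) B = emeasure Uth ((\<lambda>\<theta>. wrap (\<theta> + c)) -` B)"
    using B by (subst emeasure_distr) (auto simp: sp mc)
  also have "\<dots> = emeasure lborel ({0<..1} \<inter> (\<lambda>\<theta>. wrap (\<theta> + c)) -` B)"
  proof -
    have mw: "(\<lambda>\<theta>. wrap (\<theta> + c)) \<in> borel_measurable borel" by measurable
    have "(\<lambda>\<theta>. wrap (\<theta> + c)) -` B \<inter> space borel \<in> sets borel" by (rule measurable_sets[OF mw B])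
    thus ?thesis by (subst emeasure_Uth) auto
  qed
  also have "{0<..1} \<inter> (\<lambda>\<theta>. wrap (\<theta> + c)) -` B =
      (\<lambda>x. c0 + x) -` (B \<inter> {c0<..1}) \<union> (\<lambda>x. (c0 - 1) + x) -` (B \<inter> {0<..c0})"
  proof (intro set_eqI)
    fix \<theta>
    show "\<theta> \<in> {0<..1} \<inter> (\<lambda>\<theta>. wrap (\<theta> + c)) -` B \<longleftrightarrow> \<theta> \<in> (\<lambda>x. c0 + x) -` (B \<inter> {c0<..1}) \<union> (\<lambda>x. (c0 - 1) + x) -` (B \<inter> {0<..c0})"
    proof (cases "0 < \<theta> \<and> \<theta> \<le> 1")
      case False
      thus ?thesis using c0 by auto
    next
      case True
      show ?thesis
      proof (cases "\<theta> + c0 \<le> 1")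
        case le: True
        have w: "wrap (\<theta> + c) = \<theta> + c0" unfolding wc using le True c0 by (intro wrap_id) auto
        show ?thesis unfolding vimage_def using True le c0 w by (simp add: add.commute)
      next
        case gt: False
        have w: "wrap (\<theta> + c) = \<theta> + c0 - 1" unfolding wc using gt True c0 by (intro wrap_id2) auto
        have e: "\<theta> + (c0 - 1) = \<theta> + c0 - 1" by simp
        show ?thesis unfolding vimage_def using True gt c0 w by (simp add: add.commute e)
      qed
    qed
  qed
  also have "emeasure lborel ((\<lambda>x. c0 + x) -` (B \<inter> {c0<..1}) \<union> (\<lambda>x. (c0 - 1) + x) -` (B \<inter> {0<..c0})) =
     emeasure lborel ((\<lambda>x. c0 + x) -` (B \<inter> {c0<..1})) + emeasure lborel ((\<lambda>x. (c0 - 1) + x) -` (B \<inter> {0<..c0}))"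
    using B by (intro plus_emeasure[symmetric]) auto
  also have "\<dots> = emeasure lborel (B \<inter> {c0<..1}) + emeasure lborel (B \<inter> {0<..c0})"
    using B lborel_transl[of "B \<inter> {c0<..1}" c0] lborel_transl[of "B \<inter> {0<..c0}" "c0 - 1"] by simp
  also have "\<dots> = emeasure lborel ({0<..1} \<inter> B)"
  proof -
    have "{0<..1} \<inter> B = (B \<inter> {c0<..1}) \<union> (B \<inter> {0<..c0})" using c0 by auto
    moreover have "emeasure lborel (B \<inter> {c0<..1}) + emeasure lborel (B \<inter> {0<..c0}) = emeasure lborel ((B \<inter> {c0<..1}) \<union> (B \<inter> {0<..c0}))"
      using B by (intro plus_emeasure) auto
    ultimately show ?thesis by simp
  qed
  also have "\<dots> = emeasure Uth B" using B by (simp add: emeasure_Uth)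
  finally show "emeasure (distr Uth borel (\<lambda>\<theta>. wrap (\<theta> + c))) B = emeasure Uth B" .
qed




definition enc :: "real \<times> real \<Rightarrow> real \<Rightarrow> real" where "enc p = (\<lambda>i. if i = 0 then fst p else snd p)"
definition "QQ = Us \<Otimes>\<^sub>M Uth"
definition "MM = distr QQ path_space enc"

lemma sets_QQ: "sets QQ = sets (borel \<Otimes>\<^sub>M borel)"
  unfolding QQ_def by (rule sets_pair_measure_cong) simp_all

lemma prob_QQ: "prob_space QQ" unfolding QQ_def using prob_Us prob_Uth by (rule prob_space_pair)

lemma space_path: "space path_space = UNIV" by (simp add: path_space_def space_PiM)

lemma meas_path_iff:
  assumes "\<And>y. (\<lambda>w. F w y) \<in> borel_measurable N"
  shows "F \<in> measurable N path_space"
  unfolding path_space_def by (rule measurable_PiM_single') (use assms in auto)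

lemma enc_meas: "enc \<in> measurable QQ path_space"
proof -
  have "enc \<in> measurable (borel \<Otimes>\<^sub>M borel) path_space"
    by (rule meas_path_iff) (simp add: enc_def)
  thus ?thesis by (simp only: measurable_cong_sets[OF sets_QQ refl])
qed

context prm begin

lemma gap_meas[measurable]: "(\<lambda>s. gap s j) \<in> borel_measurable borel"
  unfolding gap_def gp_def by measurable

lemma pts_meas[measurable]: "(\<lambda>s. pts s j) \<in> borel_measurable borel"
  unfolding pts_def by measurable

lemma Gs_meas[measurable]:
  assumes [measurable]: "f \<in> borel_measurable N" "h \<in> borel_measurable N"
  shows "(\<lambda>w. Gs (f w) (h w)) \<in> borel_measurable N"
proof -
  have e: "(\<lambda>w. Gs (f w) (h w)) = (\<lambda>w. if f w < rho then Gf (pts (f w)) nn (h w) else 1)"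
    unfolding Gs_def by auto
  have [measurable]: "(\<lambda>w. pts (f w) i) \<in> borel_measurable N" for i by measurable
  show ?thesis unfolding e by measurable
qed

definition "XX w = shift (w 1) (Gs (w 0))"
definition "Phi p = shift (snd p) (Gs (fst p))"

lemma Phi_meas: "Phi \<in> measurable (borel \<Otimes>\<^sub>M borel) path_space"
  by (rule meas_path_iff) (simp add: Phi_def shift_def)

lemma Phi_measQ: "Phi \<in> measurable QQ path_space"
  using Phi_meas by (simp only: measurable_cong_sets[OF sets_QQ refl])

lemma sets_MM: "sets MM = sets path_space" unfolding MM_def by simp

lemma XX_meas: "XX \<in> measurable MM path_space"
proof -
  note [measurable] = coord_meas
  have "XX \<in> measurable path_space path_space"
    by (rule meas_path_iff) (simp add: XX_def shift_def)
  thus ?thesis by (simp only: measurable_cong_sets[OF sets_MM refl])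
qed

lemma XX_enc: "XX \<circ> enc = Phi"
  by (auto simp: XX_def Phi_def enc_def fun_eq_iff)

lemma XX_Hper: "XX w \<in> Hper" unfolding XX_def by (intro shift_Hper Gs_Hper)

lemma shift_XX_enc: "(\<lambda>w. shift d (XX w)) \<circ> enc = Phi \<circ> (\<lambda>(s, \<theta>). (s, wrap (\<theta> + d)))"
proof (rule ext)
  fix p :: "real \<times> real"
  obtain s \<theta> where p: "p = (s, \<theta>)" by fastforce
  have "Gs s (y + d + \<theta>) = Gs s (y + wrap (\<theta> + d))" for y
  proof -
    have "y + d + \<theta> = y + wrap (\<theta> + d) + of_int (\<lceil>\<theta> + d\<rceil> - 1)" using wrap_diff[of "\<theta> + d"] by simp
    thus ?thesis using Hper_int[OF Gs_Hper] by metis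
  qed
  thus "((\<lambda>w. shift d (XX w)) \<circ> enc) p = (Phi \<circ> (\<lambda>(s, \<theta>). (s, wrap (\<theta> + d)))) p"
    unfolding p by (auto simp: XX_def Phi_def enc_def shift_def fun_eq_iff ac_simps)
qed

lemma QQ_invariant: "distr QQ (borel \<Otimes>\<^sub>M borel) (\<lambda>(s, \<theta>). (s, wrap (\<theta> + d))) = QQ"
proof -
  have "distr Us borel (\<lambda>x. x) \<Otimes>\<^sub>M distr Uth borel (\<lambda>\<theta>. wrap (\<theta> + d)) =
      distr (Us \<Otimes>\<^sub>M Uth) (borel \<Otimes>\<^sub>M borel) (\<lambda>(x, y). (x, wrap (y + d)))"
  proof (rule pair_measure_distr)
    show "(\<lambda>x. x) \<in> borel_measurable Us" by (simp only: measurable_cong_sets[OF sets_Us refl]) simp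
    show "(\<lambda>\<theta>. wrap (\<theta> + d)) \<in> borel_measurable Uth" by (simp only: measurable_cong_sets[OF sets_Uth refl]) simp
    show "sigma_finite_measure (distr Uth borel (\<lambda>\<theta>. wrap (\<theta> + d)))"
      unfolding Uth_invariant using prob_Uth by (simp add: prob_space_imp_sigma_finite)
  qed
  moreover have "distr Us borel (\<lambda>x. x) = Us" by (rule distr_id2) simp
  ultimately show ?thesis unfolding QQ_def Uth_invariant by simp
qed

lemma stationary: "periodic_stationary MM XX"
  unfolding periodic_stationary_def
proof (intro conjI ballI allI)
  show "prob_space MM" unfolding MM_def using prob_QQ enc_meas by (rule prob_space.prob_space_distr)
  show "XX w \<in> Hper" for w by (rule XX_Hper)
  show "XX \<in> measurable MM path_space" by (rule XX_meas)
  fix d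
  have m1: "(\<lambda>w. shift d (XX w)) \<in> measurable MM path_space"
  proof -
    note [measurable] = coord_meas
    have "(\<lambda>w. shift d (XX w)) \<in> measurable path_space path_space"
      by (rule meas_path_iff) (simp add: XX_def shift_def)
    thus ?thesis by (simp only: measurable_cong_sets[OF sets_MM refl])
  qed
  have tr: "(\<lambda>(s, \<theta>). (s, wrap (\<theta> + d))) \<in> measurable QQ (borel \<Otimes>\<^sub>M borel)"
  proof -
    have "(\<lambda>(s::real, \<theta>). (s, wrap (\<theta> + d))) \<in> measurable (borel \<Otimes>\<^sub>M borel) (borel \<Otimes>\<^sub>M borel)" by measurable
    thus ?thesis by (simp only: measurable_cong_sets[OF sets_QQ refl])
  qed
  have "distr MM path_space (\<lambda>w. shift d (XX w)) = distr QQ path_space ((\<lambda>w. shift d (XX w)) \<circ> enc)"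
    unfolding MM_def by (rule distr_distr) (use m1 enc_meas in \<open>auto simp: MM_def\<close>)
  also have "\<dots> = distr QQ path_space (Phi \<circ> (\<lambda>(s, \<theta>). (s, wrap (\<theta> + d))))" unfolding shift_XX_enc ..
  also have "\<dots> = distr (distr QQ (borel \<Otimes>\<^sub>M borel) (\<lambda>(s, \<theta>). (s, wrap (\<theta> + d)))) path_space Phi"
    by (rule distr_distr[symmetric]) (use Phi_meas tr in auto)
  also have "\<dots> = distr QQ path_space Phi" unfolding QQ_invariant ..
  also have "\<dots> = distr QQ path_space (XX \<circ> enc)" unfolding XX_enc ..
  also have "\<dots> = distr MM path_space XX"
    unfolding MM_def by (rule distr_distr[symmetric]) (use XX_meas enc_meas in \<open>auto simp: MM_def\<close>)
  finally show "distr MM path_space (\<lambda>w. shift d (XX w)) = distr MM path_space XX" .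
qed

end



lemma ereal_image_sets: "A \<in> sets borel \<Longrightarrow> ereal ` A \<in> sets (borel :: ereal measure)"
proof -
  assume A[measurable]: "A \<in> sets borel"
  have "ereal ` A = {x \<in> space borel. real_of_ereal x \<in> A \<and> x \<noteq> \<infinity> \<and> x \<noteq> -\<infinity>}"
  proof (intro set_eqI iffI)
    fix x assume "x \<in> ereal ` A" thus "x \<in> {x \<in> space borel. real_of_ereal x \<in> A \<and> x \<noteq> \<infinity> \<and> x \<noteq> -\<infinity>}" by auto
  next
    fix x assume "x \<in> {x \<in> space borel. real_of_ereal x \<in> A \<and> x \<noteq> \<infinity> \<and> x \<noteq> -\<infinity>}"
    thus "x \<in> ereal ` A" by (cases x) auto
  qed
  also have "\<dots> \<in> sets borel" by measurable
  finally show ?thesis .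
qed

context prm begin

lemma cnt_alt: "cnt s x = (\<Sum>i<nn. if x < gap s i then 1 else 0)"
  unfolding cnt_def by (intro sum.cong) (auto simp: indicator_def)

lemma cnt_meas[measurable]: "(\<lambda>p. cnt (fst p) (snd p)) \<in> borel_measurable (borel \<Otimes>\<^sub>M borel)"
  unfolding cnt_alt by measurable

lemma h_meas: "(\<lambda>w. Lz (XX w) 0 T) \<in> borel_measurable MM"
proof -
  have "XX \<in> measurable MM (restrict_space path_space Hper)"
    by (rule measurable_restrict_space2) (use XX_Hper XX_meas in auto)
  from measurable_comp[OF this Lz_meas[of 0 T]] show ?thesis by (simp add: o_def)
qed

lemma slice:
  assumes A: "A \<in> sets borel" "A \<subseteq> {0<..}" and s: "0 \<le> s" "s \<le> 1"
  shows "emeasure Uth {\<theta>. Lz (Phi (s, \<theta>)) 0 T \<in> ereal ` A} = (\<integral>\<^sup>+ x. indicator A x * cnt s x \<partial>lborel)"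
proof -
  have Sm: "{\<theta>. Lz (Phi (s, \<theta>)) 0 T \<in> ereal ` A} \<in> sets borel"
  proof -
    have hm: "(\<lambda>w. Lz (XX w) 0 T) \<in> borel_measurable path_space"
      using h_meas by (simp only: measurable_cong_sets[OF sets_MM refl])
    have "(\<lambda>w. Lz (XX w) 0 T) \<circ> enc \<in> borel_measurable QQ" by (rule measurable_comp[OF enc_meas hm])
    moreover have "(\<lambda>w. Lz (XX w) 0 T) \<circ> enc = (\<lambda>p. Lz (Phi p) 0 T)" using XX_enc by (metis comp_apply)
    ultimately have "(\<lambda>p. Lz (Phi p) 0 T) \<in> borel_measurable QQ" by simp
    hence "(\<lambda>p. Lz (Phi p) 0 T) \<in> borel_measurable (borel \<Otimes>\<^sub>M borel)"
      by (simp only: measurable_cong_sets[OF sets_QQ refl])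
    hence "(\<lambda>\<theta>. Lz (Phi (s, \<theta>)) 0 T) \<in> borel_measurable borel" by measurable
    from measurable_sets[OF this ereal_image_sets[OF A(1)]] show ?thesis by (simp add: vimage_def)
  qed
  have "emeasure Uth {\<theta>. Lz (Phi (s, \<theta>)) 0 T \<in> ereal ` A} = emeasure lborel ({0<..1} \<inter> {\<theta>. Lz (Phi (s, \<theta>)) 0 T \<in> ereal ` A})"
    using Sm by (rule emeasure_Uth)
  also have "{0<..1} \<inter> {\<theta>. Lz (Phi (s, \<theta>)) 0 T \<in> ereal ` A} = {\<theta>\<in>{0<..1}. Lz (shift \<theta> (Gs s)) 0 T \<in> ereal ` A}"
    by (auto simp: Phi_def)
  also have "emeasure lborel \<dots> = (\<integral>\<^sup>+ x. indicator A x * cnt s x \<partial>lborel)"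
  proof (cases "s < rho")
    case True
    interpret cf: cfg "pts s" nn T "Gs s" by (rule cfg_s) (use s True in auto)
    have "emeasure lborel {\<theta>\<in>{0<..1}. Lz (shift \<theta> (Gs s)) 0 T \<in> ereal ` A} =
        (\<Sum>i<nn. emeasure lborel (A \<inter> {..< pts s (Suc i) - pts s i}))" by (rule cf.phase_measure[OF A])
    also have "\<dots> = (\<Sum>i<nn. emeasure lborel (A \<inter> {..< gap s i}))" by (simp add: pts_def)
    also have "\<dots> = (\<Sum>i<nn. \<integral>\<^sup>+ x. indicator (A \<inter> {..< gap s i}) x \<partial>lborel)"
      using A by (intro sum.cong refl nn_integral_indicator[symmetric]) auto
    also have "\<dots> = (\<integral>\<^sup>+ x. (\<Sum>i<nn. indicator (A \<inter> {..< gap s i}) x) \<partial>lborel)"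
      using A by (intro nn_integral_sum[symmetric]) auto
    also have "\<dots> = (\<integral>\<^sup>+ x. indicator A x * cnt s x \<partial>lborel)"
      unfolding cnt_def by (intro nn_integral_cong) (simp add: sum_distrib_left indicator_inter_arith)
    finally show ?thesis .
  next
    case False
    have g: "Gs s = (\<lambda>_. 1)" using False by (simp add: Gs_def)
    have "Lz (shift \<theta> (Gs s)) 0 T = \<infinity>" for \<theta>
      unfolding g Lz_def by (simp add: shift_def Zs_def)
    hence e: "{\<theta>\<in>{0<..1}. Lz (shift \<theta> (Gs s)) 0 T \<in> ereal ` A} = {}" by auto
    have z: "indicator A x * cnt s x = 0" for x
    proof (cases "x \<in> A")
      case True hence "0 < x" using A by auto
      have "\<not> s < q1" using False q_bounds by auto
      thus ?thesis using False \<open>0 < x\<close> by (simp add: cnt_def gap_def)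
    qed simp
    show ?thesis unfolding e z by simp
  qed
  finally show ?thesis .
qed

end



lemma tri_integral:
  fixes b c :: real assumes b: "0 < b" and c: "0 < c"
  shows "(\<integral>\<^sup>+ x. ennreal (c * (b - x)) * indicator {0<..<b} x \<partial>lborel) = ennreal (c * b^2 / 2)"
proof -
  have "((\<lambda>x. c * (b - x)) has_integral ((\<lambda>x. c * (b * x - x^2/2)) b - (\<lambda>x. c * (b * x - x^2/2)) 0)) {0..b}"
  proof (rule fundamental_theorem_of_calculus)
    show "0 \<le> b" using b by simp
    fix x :: real assume "x \<in> {0..b}"
    have "((\<lambda>x. c * (b * x - x^2/2)) has_real_derivative c * (b - x)) (at x within {0..b})"
      by (auto intro!: derivative_eq_intros simp: algebra_simps)
    thus "((\<lambda>x. c * (b * x - x^2/2)) has_vector_derivative c * (b - x)) (at x within {0..b})"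
      by (simp add: has_real_derivative_iff_has_vector_derivative)
  qed
  hence "((\<lambda>x. c * (b - x)) has_integral (c * b^2 / 2)) {0<..<b}"
    by (simp add: has_integral_Icc_iff_Ioo power2_eq_square algebra_simps)
  from nn_integral_has_integral_lebesgue'[where f="\<lambda>x. c * (b - x)", OF _ this] show ?thesis using c by auto
qed

context prm begin

lemma cnt_meas2[measurable]: "cnt s \<in> borel_measurable borel"
proof -
  have "cnt s = (\<lambda>x. \<Sum>i<nn. if x < gap s i then 1 else 0)" by (simp add: cnt_alt fun_eq_iff)
  also have "\<dots> \<in> borel_measurable borel" by measurable
  finally show ?thesis .
qed

lemma law:
  assumes A: "A \<in> sets borel" "A \<subseteq> {0<..<T}"
  shows "emeasure (distr MM borel (\<lambda>w. Lz (XX w) 0 T)) (ereal ` A) =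
     (\<integral>\<^sup>+ x. indicator A x * ennreal (if x < b then c * (b - x) else 0) \<partial>lborel)"
proof -
  have A0: "A \<subseteq> {0<..}" using A by auto
  have hm: "(\<lambda>w. Lz (XX w) 0 T) \<in> borel_measurable path_space"
    using h_meas by (simp only: measurable_cong_sets[OF sets_MM refl])
  have XXe: "XX (enc p) = Phi p" for p using XX_enc by (metis comp_apply)
  have hpm: "(\<lambda>p. Lz (Phi p) 0 T) \<in> borel_measurable QQ"
  proof -
    have "(\<lambda>w. Lz (XX w) 0 T) \<circ> enc \<in> borel_measurable QQ" by (rule measurable_comp[OF enc_meas hm])
    moreover have "(\<lambda>w. Lz (XX w) 0 T) \<circ> enc = (\<lambda>p. Lz (Phi p) 0 T)" using XXe by auto
    ultimately show ?thesis by simp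
  qed
  have eA: "ereal ` A \<in> sets borel" by (rule ereal_image_sets[OF A(1)])
  have spQ: "space QQ = UNIV" unfolding QQ_def by (simp add: space_pair_measure Us_def Uth_def)
  define E where "E = (\<lambda>p. Lz (Phi p) 0 T) -` ereal ` A \<inter> space QQ"
  have Em: "E \<in> sets QQ" unfolding E_def by (rule measurable_sets[OF hpm eA])
  have Em3: "E \<in> sets (borel \<Otimes>\<^sub>M borel)" using Em unfolding sets_QQ .
  have "distr MM borel (\<lambda>w. Lz (XX w) 0 T) = distr QQ borel ((\<lambda>w. Lz (XX w) 0 T) \<circ> enc)"
    unfolding MM_def by (rule distr_distr) (use hm enc_meas in auto)
  also have "(\<lambda>w. Lz (XX w) 0 T) \<circ> enc = (\<lambda>p. Lz (Phi p) 0 T)" using XXe by auto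
  finally have "emeasure (distr MM borel (\<lambda>w. Lz (XX w) 0 T)) (ereal ` A) = emeasure QQ E"
    unfolding E_def using hpm eA by (simp add: emeasure_distr)
  also have "\<dots> = (\<integral>\<^sup>+ s. emeasure Uth (Pair s -` E) \<partial>Us)"
    unfolding QQ_def
    by (rule sigma_finite_measure.emeasure_pair_measure_alt[OF prob_space_imp_sigma_finite[OF prob_Uth]])
       (use Em Em3 in \<open>simp add: QQ_def\<close>)
  also have "\<dots> = (\<integral>\<^sup>+ s. indicator {0..1} s * emeasure Uth (Pair s -` E) \<partial>lborel)"
  proof -
    have "(\<lambda>s. emeasure Uth (Pair s -` E)) \<in> borel_measurable Us"
      by (rule sigma_finite_measure.measurable_emeasure_Pair[OF prob_space_imp_sigma_finite[OF prob_Uth]])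
         (use Em Em3 in \<open>simp add: QQ_def\<close>)
    hence "(\<lambda>s. emeasure Uth (Pair s -` E)) \<in> borel_measurable lborel"
      by (simp only: measurable_cong_sets[OF sets_Us refl]) simp
    thus ?thesis unfolding Us_def by (subst nn_integral_density) auto
  qed
  also have "\<dots> = (\<integral>\<^sup>+ s. indicator {0..1} s * (\<integral>\<^sup>+ x. indicator A x * cnt s x \<partial>lborel) \<partial>lborel)"
  proof (intro nn_integral_cong)
    fix s :: real
    show "indicator {0..1} s * emeasure Uth (Pair s -` E) = indicator {0..1} s * (\<integral>\<^sup>+ x. indicator A x * cnt s x \<partial>lborel)"
    proof (cases "s \<in> {0..1}")
      case True
      have "Pair s -` E = {\<theta>. Lz (Phi (s, \<theta>)) 0 T \<in> ereal ` A}" unfolding E_def spQ by auto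
      thus ?thesis using slice[OF A(1) A0, of s] True by simp
    qed simp
  qed
  also have "\<dots> = (\<integral>\<^sup>+ s. (\<integral>\<^sup>+ x. indicator {0..1} s * (indicator A x * cnt s x) \<partial>lborel) \<partial>lborel)"
  proof (intro nn_integral_cong)
    fix s :: real
    have "(\<lambda>x. indicator A x * cnt s x) \<in> borel_measurable lborel" using A(1) by measurable
    thus "indicator {0..1} s * (\<integral>\<^sup>+ x. indicator A x * cnt s x \<partial>lborel) = (\<integral>\<^sup>+ x. indicator {0..1} s * (indicator A x * cnt s x) \<partial>lborel)"
      by (rule nn_integral_cmult[symmetric])
  qed
  also have "\<dots> = (\<integral>\<^sup>+ x. (\<integral>\<^sup>+ s. indicator {0..1} s * (indicator A x * cnt s x) \<partial>lborel) \<partial>lborel)"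
  proof (rule lborel_pair.Fubini'[symmetric])
    show "(\<lambda>(s, x). indicator {0..1} s * (indicator A x * cnt s x)) \<in> borel_measurable (lborel \<Otimes>\<^sub>M lborel)"
    proof -
      have "(\<lambda>p. indicator {0..1::real} (fst p) * (indicator A (snd p) * cnt (fst p) (snd p))) \<in> borel_measurable (borel \<Otimes>\<^sub>M borel)"
        using A(1) by measurable
      thus ?thesis by (simp add: case_prod_beta')
    qed
  qed
  also have "\<dots> = (\<integral>\<^sup>+ x. indicator A x * ennreal (if x < b then c * (b - x) else 0) \<partial>lborel)"
  proof (intro nn_integral_cong)
    fix x :: real
    show "(\<integral>\<^sup>+ s. indicator {0..1} s * (indicator A x * cnt s x) \<partial>lborel) = indicator A x * ennreal (if x < b then c * (b - x) else 0)"
    proof (cases "x \<in> A")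
      case True
      hence x: "0 < x" using A0 by auto
      have "(\<integral>\<^sup>+ s. indicator {0..1} s * (indicator A x * cnt s x) \<partial>lborel) = (\<integral>\<^sup>+ s. indicator {0..1} s * cnt s x \<partial>lborel)"
        using True by simp
      also have "\<dots> = ennreal (if x < b then c * (b - x) else 0)" by (rule W_eq[OF x])
      finally show ?thesis using True by simp
    qed simp
  qed
  finally show ?thesis .
qed

end



theorem mainTheorem16:
  fixes T b c :: real and f :: "real \<Rightarrow> real"
  assumes "0 < T" and "T \<le> 1"
    and "0 < b" and "b \<le> T" and "0 < c"
    and "in_d T f (A_M T)"
    and "\<forall>x\<in>{0<..<b}. f x = c * (b - x)"
    and "\<forall>x\<in>{b..<T}. f x = 0"
  shows "in_d T f (I_M T)"
proof -
  note as = assms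
  obtain N where N: "N \<in> A_M T" "has_density_on T N f" using as(6) unfolding in_d_def by auto
  have pN: "prob_space N" using N(1) unfolding A_M_def by auto
  have "emeasure N (ereal ` {0<..<b}) = (\<integral>\<^sup>+ x. indicator {0<..<b} x * ennreal (f x) \<partial>lborel)"
  proof -
    have "{0<..<b} \<subseteq> {0<..<T}" using as(4) by auto
    moreover have "{0<..<b} \<in> sets lborel" by simp
    ultimately show ?thesis using N(2) unfolding has_density_on_def by blast
  qed
  also have "\<dots> = (\<integral>\<^sup>+ x. ennreal (c * (b - x)) * indicator {0<..<b} x \<partial>lborel)"
    using as(7) by (intro nn_integral_cong) (auto simp: indicator_def)
  also have "\<dots> = ennreal (c * b^2 / 2)" by (rule tri_integral) (use as in auto)
  finally have "ennreal (c * b^2 / 2) \<le> 1" using prob_space.emeasure_le_1[OF pN] by metis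
  hence rho1: "c * b^2 / 2 \<le> 1" by (simp add: ennreal_le_1)
  interpret P: prm b c T using as rho1 by unfold_locales auto
  define N' where "N' = distr MM borel (\<lambda>w. Lz (P.XX w) 0 T)"
  have "N' \<in> I_M T"
    unfolding I_M_def N'_def using P.stationary intrinsic_Lz first_time_Lz by blast
  moreover have "has_density_on T N' f"
    unfolding has_density_on_def
  proof (intro ballI impI)
    fix A :: "real set" assume A: "A \<in> sets lborel" "A \<subseteq> {0<..<T}"
    have "emeasure N' (ereal ` A) = (\<integral>\<^sup>+ x. indicator A x * ennreal (if x < b then c * (b - x) else 0) \<partial>lborel)"
      unfolding N'_def by (rule P.law) (use A in auto)
    also have "\<dots> = (\<integral>\<^sup>+ x. indicator A x * ennreal (f x) \<partial>lborel)"
    proof (intro nn_integral_cong)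
      fix x show "indicator A x * ennreal (if x < b then c * (b - x) else 0) = indicator A x * ennreal (f x)"
      proof (cases "x \<in> A")
        case True
        hence x: "0 < x" "x < T" using A by auto
        show ?thesis using True x as(7,8) by (cases "x < b") auto
      qed simp
    qed
    finally show "emeasure N' (ereal ` A) = (\<integral>\<^sup>+ x. indicator A x * ennreal (f x) \<partial>lborel)" .
  qed
  ultimately show ?thesis unfolding in_d_def by blast
qed


end
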